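(* The holomorphic volume form is $\tilde\nabla$-parallel: $\tilde\nabla_a\Omega_{bcd}=0$.
   Context: $X$ is a compact Calabi–Yau threefold with full $SU(3)$ holonomy, Ricci-flat Kähler metric $g$, holomorphic volume form $\Omega=\tfrac16\Omega_{abc}dz^{abc}$. $h\in\mathcal H^{0,1}(T^{1,0}X)$ is $g$-harmonic with components $h^a{}_{\bar b}$, and $\tfrac16h^a\wedge h^b\wedge h^c\Omega_{abc}=|h|\bar\Omega$ with $|h|$ a nonzero constant; $(h^{-1})^{\bar a}{}_b$ is the inverse matrix. The connection $\tilde\nabla$ acts by $\tilde\nabla_a\beta^b=h^b{}_{\bar c}\,\partial_a\big((h^{-1})^{\bar c}{}_c\beta^c\big)$ on holomorphic-vector indices and $\tilde\nabla_a\alpha_b=(h^{-1})^{\bar c}{}_b\,\partial_a\big(h^d{}_{\bar c}\alpha_d\big)$ on holomorphic-covector indices, extended to tensors by the Leibniz rule. *)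

theory Defs
  imports "HOL-Analysis.Analysis"
begin

text \<open>Local holomorphic chart of the threefold: an open set U of complex^3 with
  holomorphic coordinates z^1, z^2, z^3 (indices range over the type 3).\<close>

type_synonym pt = "complex ^ 3"

text \<open>Wirtinger derivative d/dz^a of a complex function at p:
  (d/dx_a - i d/dy_a)/2, with z^a = x_a + i y_a.\<close>
definition wirt :: "3 \<Rightarrow> (pt \<Rightarrow> complex) \<Rightarrow> pt \<Rightarrow> complex" where
  "wirt a f p =
     (vector_derivative (\<lambda>t::real. f (p + t *\<^sub>R axis a 1)) (at 0)
      - \<i> * vector_derivative (\<lambda>t::real. f (p + t *\<^sub>R axis a \<i>)) (at 0)) / 2"

definition holo3 :: "pt set \<Rightarrow> (pt \<Rightarrow> complex) \<Rightarrow> bool" where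
  "holo3 U f \<longleftrightarrow> (\<forall>p\<in>U. \<exists>L. (f has_derivative L) (at p) \<and>
                        (\<forall>(c::complex) v. L (c *s v) = c * L v))"

text \<open>h p $ a $ b = h^a_{bar b}(p);  hinv h p $ b $ a = (h^{-1})^{bar b}_a(p).\<close>
definition hinv :: "(pt \<Rightarrow> complex^3^3) \<Rightarrow> pt \<Rightarrow> complex^3^3" where
  "hinv h p = matrix_inv (h p)"

text \<open>Connection coefficients read off from the covector rule
  nabla_a alpha_b = (h^{-1})^{bar c}_b d_a (h^d_{bar c} alpha_d)
   = d_a alpha_b + Gamma_{a b}^d alpha_d,
  Gamma_{a b}^d = (h^{-1})^{bar c}_b d_a h^d_{bar c}.\<close>
definition Gam :: "(pt \<Rightarrow> complex^3^3) \<Rightarrow> 3 \<Rightarrow> 3 \<Rightarrow> 3 \<Rightarrow> pt \<Rightarrow> complex" where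
  "Gam h a b d p = (\<Sum>c\<in>UNIV. hinv h p $ c $ b * wirt a (\<lambda>q. h q $ d $ c) p)"

definition nabla_cov :: "(pt \<Rightarrow> complex^3^3) \<Rightarrow> 3 \<Rightarrow> (3 \<Rightarrow> pt \<Rightarrow> complex) \<Rightarrow> 3 \<Rightarrow> pt \<Rightarrow> complex" where
  "nabla_cov h a \<alpha> b p =
     (\<Sum>c\<in>UNIV. hinv h p $ c $ b * wirt a (\<lambda>q. \<Sum>d\<in>UNIV. h q $ d $ c * \<alpha> d q) p)"

definition nabla3 :: "(pt \<Rightarrow> complex^3^3) \<Rightarrow> 3 \<Rightarrow> (pt \<Rightarrow> 3 \<Rightarrow> 3 \<Rightarrow> 3 \<Rightarrow> complex)
                      \<Rightarrow> 3 \<Rightarrow> 3 \<Rightarrow> 3 \<Rightarrow> pt \<Rightarrow> complex" where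
  "nabla3 h a T b c d p =
     wirt a (\<lambda>q. T q b c d) p
     + (\<Sum>e\<in>UNIV. Gam h a b e p * T p e c d)
     + (\<Sum>e\<in>UNIV. Gam h a c e p * T p b e d)
     + (\<Sum>e\<in>UNIV. Gam h a d e p * T p b c e)"

end

theory Submission imports Defs begin

lemma vd_line:
  assumes "(f has_derivative L) (at p)"
  shows "vector_derivative (\<lambda>t::real. f (p + t *\<^sub>R v)) (at 0) = L v"
proof -
  have l: "((\<lambda>t::real. p + t *\<^sub>R v) has_derivative (\<lambda>t. t *\<^sub>R v)) (at 0)"
    by (auto intro!: derivative_eq_intros)
  have f0: "(f has_derivative L) (at (p + (0::real) *\<^sub>R v))" using assms by simp
  have "((\<lambda>t::real. f (p + t *\<^sub>R v)) has_derivative (\<lambda>t. L (t *\<^sub>R v))) (at 0)"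
    using diff_chain_at[OF l f0] by (simp add: o_def)
  moreover have "(\<lambda>t. L (t *\<^sub>R v)) = (\<lambda>t. t *\<^sub>R L v)"
    using has_derivative_bounded_linear[OF assms] linear_scale linear_simps(5) by (metis bounded_linear.linear)
  ultimately have "((\<lambda>t::real. f (p + t *\<^sub>R v)) has_vector_derivative L v) (at 0)"
    unfolding has_vector_derivative_def by simp
  then show ?thesis by (rule vector_derivative_at)
qed

lemma wirt_deriv:
  assumes "(f has_derivative L) (at p)"
  shows "wirt a f p = (L (axis a 1) - \<i> * L (axis a \<i>)) / 2"
  unfolding wirt_def vd_line[OF assms] ..

lemma axis_i: "axis a (\<i>::complex) = \<i> *s axis a 1"
  by (simp add: vec_eq_iff axis_def)

lemma wirt_mult:
  assumes "f differentiable at p" "g differentiable at p"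
  shows "wirt a (\<lambda>q. f q * g q) p = f p * wirt a g p + wirt a f p * g p"
proof -
  obtain F G where F: "(f has_derivative F) (at p)" and G: "(g has_derivative G) (at p)"
    using assms unfolding differentiable_def by blast
  show ?thesis
    unfolding wirt_deriv[where a=a, OF has_derivative_mult[OF F G]] wirt_deriv[where a=a, OF F] wirt_deriv[where a=a, OF G]
    by (simp add: field_simps)
qed

lemma wirt_add:
  assumes "f differentiable at p" "g differentiable at p"
  shows "wirt a (\<lambda>q. f q + g q) p = wirt a f p + wirt a g p"
proof -
  obtain F G where F: "(f has_derivative F) (at p)" and G: "(g has_derivative G) (at p)"
    using assms unfolding differentiable_def by blast
  show ?thesis
    unfolding wirt_deriv[where a=a, OF has_derivative_add[OF F G]] wirt_deriv[where a=a, OF F] wirt_deriv[where a=a, OF G]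
    by (simp add: field_simps)
qed

lemma wirt_diff:
  assumes "f differentiable at p" "g differentiable at p"
  shows "wirt a (\<lambda>q. f q - g q) p = wirt a f p - wirt a g p"
proof -
  obtain F G where F: "(f has_derivative F) (at p)" and G: "(g has_derivative G) (at p)"
    using assms unfolding differentiable_def by blast
  show ?thesis
    unfolding wirt_deriv[where a=a, OF has_derivative_diff[OF F G]] wirt_deriv[where a=a, OF F] wirt_deriv[where a=a, OF G]
    by (simp add: field_simps)
qed

lemma wirt_cmult:
  assumes "f differentiable at p"
  shows "wirt a (\<lambda>q. k * f q) p = k * wirt a f p"
proof -
  obtain F where F: "(f has_derivative F) (at p)"
    using assms unfolding differentiable_def by blast
  show ?thesis
    unfolding wirt_deriv[where a=a, OF has_derivative_mult_right[OF F]] wirt_deriv[where a=a, OF F]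
    by (simp add: field_simps)
qed

lemma wirt_local:
  assumes "f differentiable at p" "open S" "p \<in> S" "\<And>q. q \<in> S \<Longrightarrow> f q = g q"
  shows "wirt a g p = wirt a f p"
proof -
  obtain F where F: "(f has_derivative F) (at p)"
    using assms unfolding differentiable_def by blast
  have G: "(g has_derivative F) (at p)"
    using has_derivative_transform_within_open[OF F assms(2,3)] assms(4) by blast
  show ?thesis unfolding wirt_deriv[where a=a, OF F] wirt_deriv[where a=a, OF G] ..
qed

lemma wirt_cnj:
  assumes "(f has_derivative L) (at p)" "\<And>(c::complex) v. L (c *s v) = c * L v"
  shows "wirt a (\<lambda>q. cnj (f q)) p = 0"
proof -
  have "((\<lambda>q. cnj (f q)) has_derivative (\<lambda>v. cnj (L v))) (at p)"
    using bounded_linear.has_derivative[OF bounded_linear_cnj assms(1)] .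
  from wirt_deriv[where a=a, OF this] show ?thesis
    by (simp add: axis_i assms(2))
qed

definition eps :: "3 \<Rightarrow> 3 \<Rightarrow> 3 \<Rightarrow> complex" where
  "eps b c d = (if (b,c,d) \<in> {(1,2,3),(2,3,1),(3,1,2)} then 1
     else if (b,c,d) \<in> {(2,1,3),(1,3,2),(3,2,1)} then -1 else 0)"

lemma eps_tab:
  "eps 1 1 1 = 0"
  "eps 1 1 2 = 0"
  "eps 1 1 3 = 0"
  "eps 1 2 1 = 0"
  "eps 1 2 2 = 0"
  "eps 1 2 3 = 1"
  "eps 1 3 1 = 0"
  "eps 1 3 2 = -1"
  "eps 1 3 3 = 0"
  "eps 2 1 1 = 0"
  "eps 2 1 2 = 0"
  "eps 2 1 3 = -1"
  "eps 2 2 1 = 0"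
  "eps 2 2 2 = 0"
  "eps 2 2 3 = 0"
  "eps 2 3 1 = 1"
  "eps 2 3 2 = 0"
  "eps 2 3 3 = 0"
  "eps 3 1 1 = 0"
  "eps 3 1 2 = 1"
  "eps 3 1 3 = 0"
  "eps 3 2 1 = -1"
  "eps 3 2 2 = 0"
  "eps 3 2 3 = 0"
  "eps 3 3 1 = 0"
  "eps 3 3 2 = 0"
  "eps 3 3 3 = 0"
  by (simp_all add: eps_def)

lemma eps_trace:
  fixes M :: "3 \<Rightarrow> 3 \<Rightarrow> complex"
  shows "(\<Sum>e\<in>UNIV. M b e * eps e c d) + (\<Sum>e\<in>UNIV. M c e * eps b e d)
       + (\<Sum>e\<in>UNIV. M d e * eps b c e) = (M 1 1 + M 2 2 + M 3 3) * eps b c d"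
proof -
  have "\<forall>b c d. (\<Sum>e\<in>UNIV. M b e * eps e c d) + (\<Sum>e\<in>UNIV. M c e * eps b e d)
       + (\<Sum>e\<in>UNIV. M d e * eps b c e) = (M 1 1 + M 2 2 + M 3 3) * eps b c d"
    unfolding sum_3 forall_3 by (simp add: eps_tab)
  then show ?thesis by blast
qed
lemma alt_rep:
  fixes W :: "3 \<Rightarrow> 3 \<Rightarrow> 3 \<Rightarrow> complex"
  assumes a1: "\<And>a b c. W a b c = - W b a c" and a2: "\<And>a b c. W a b c = - W a c b"
  shows "W b c d = eps b c d * W 1 2 3"
proof -
  have z1: "W x x z = 0" for x z using a1[of x x z] by (simp add: eq_neg_iff_add_eq_0)
  have z2: "W x z z = 0" for x z using a2[of x z z] by (simp add: eq_neg_iff_add_eq_0)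
  have z3: "W x z x = 0" for x z using a1[of x z x] z2[of z x] by simp
  have p1: "W 2 1 3 = - W 1 2 3" using a1[of 2 1 3] by simp
  have p2: "W 1 3 2 = - W 1 2 3" using a2[of 1 3 2] by simp
  have p3: "W 2 3 1 = W 1 2 3" using a2[of 2 3 1] p1 by simp
  have p4: "W 3 1 2 = W 1 2 3" using a1[of 3 1 2] p2 by simp
  have p5: "W 3 2 1 = - W 1 2 3" using a2[of 3 2 1] p4 by simp
  show ?thesis
  proof -
    have "\<forall>b c d. W b c d = eps b c d * W 1 2 3" unfolding forall_3
      by (simp only: eps_tab z1 z2 z3 p1 p2 p3 p4 p5 mult_zero_left mult_1_left mult_minus1 simp_thms)
    then show ?thesis by blast
  qed
qed

definition cofm :: "complex^3^3 \<Rightarrow> complex^3^3" where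
  "cofm A = (\<chi> c b. A$(b+1)$(c+1) * A$(b+2)$(c+2) - A$(b+1)$(c+2) * A$(b+2)$(c+1))"

lemma n45: "(4::3) = 1" "(5::3) = 2" by simp_all

lemma cofm_mult: "cofm A ** A = mat (det A)"
  unfolding vec_eq_iff matrix_matrix_mult_def cofm_def
  by (simp add: forall_3 sum_3 n45) (simp add: det_3 mat_def algebra_simps)

lemma minv_right: assumes "invertible (A::complex^3^3)" shows "A ** matrix_inv A = mat 1"
  using someI_ex[OF assms[unfolded invertible_def]] unfolding matrix_inv_def by blast

lemma cofm_inv: assumes "invertible A" shows "cofm A $ c $ b = det A * matrix_inv A $ c $ b"
proof -
  have "cofm A = cofm A ** (A ** matrix_inv A)" using minv_right[OF assms] by simp
  also have "\<dots> = (cofm A ** A) ** matrix_inv A" by (simp add: matrix_mul_assoc)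
  also have "\<dots> = mat (det A) ** matrix_inv A" by (simp add: cofm_mult)
  finally have "cofm A = mat (det A) ** matrix_inv A" .
  then show ?thesis using exhaust_3[of c]
    by (auto simp add: vec_eq_iff matrix_matrix_mult_def mat_def sum_3)
qed


theorem mainTheorem10:
  fixes U :: "pt set"
    and h :: "pt \<Rightarrow> complex^3^3"
    and \<Omega> :: "pt \<Rightarrow> 3 \<Rightarrow> 3 \<Rightarrow> 3 \<Rightarrow> complex"
    and habs :: complex
  assumes U_open: "open U"
    and h_diff: "\<And>a b. (\<lambda>q. h q $ a $ b) differentiable_on U"
    and h_inv: "\<And>p. p \<in> U \<Longrightarrow> invertible (h p)"
    and \<Omega>_holo: "\<And>a b c. holo3 U (\<lambda>q. \<Omega> q a b c)"
    and \<Omega>_alt1: "\<And>p a b c. \<Omega> p a b c = - \<Omega> p b a c"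
    and \<Omega>_alt2: "\<And>p a b c. \<Omega> p a b c = - \<Omega> p a c b"
    and \<Omega>_nonvan: "\<And>p. p \<in> U \<Longrightarrow> \<Omega> p 1 2 3 \<noteq> 0"
    and habs_nz: "habs \<noteq> 0"
    and h_vol: "\<And>p e f g. p \<in> U \<Longrightarrow>
        (\<Sum>a\<in>UNIV. \<Sum>b\<in>UNIV. \<Sum>c\<in>UNIV. h p $ a $ e * h p $ b $ f * h p $ c $ g * \<Omega> p a b c)
          = habs * cnj (\<Omega> p e f g)"
  shows "\<forall>p\<in>U. \<forall>a b c d. nabla3 h a \<Omega> b c d p = 0"
proof (intro ballI allI)
  fix p a b c d
  assume pU: "p \<in> U"
  define \<omega> where "\<omega> q = \<Omega> q 1 2 3" for q
  have \<Omega>_eq: "\<Omega> = (\<lambda>q b c d. eps b c d * \<omega> q)"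
    unfolding \<omega>_def
  proof (intro ext)
    fix q b c d
    show "\<Omega> q b c d = eps b c d * \<Omega> q 1 2 3"
      by (rule alt_rep[of "\<Omega> q"]) (rule \<Omega>_alt1, rule \<Omega>_alt2)
  qed
  have hd: "(\<lambda>q. h q $ i $ j) differentiable at p" for i j
  proof -
    have "(\<lambda>q. h q $ i $ j) differentiable (at p within U)"
      using h_diff[of i j] pU unfolding differentiable_on_def by blast
    then show ?thesis using at_within_open[OF pU U_open] by metis
  qed
  obtain L where L: "(\<omega> has_derivative L) (at p)" and Llin: "\<And>(c::complex) v. L (c *s v) = c * L v"
    using \<Omega>_holo[of 1 2 3] pU unfolding holo3_def \<omega>_def by blast
  have \<omega>d: "\<omega> differentiable at p" using L unfolding differentiable_def by blast
  have cd: "(\<lambda>q. cnj (\<omega> q)) differentiable at p"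
    using bounded_linear.has_derivative[OF bounded_linear_cnj L] unfolding differentiable_def by blast
  have dd: "(\<lambda>q. det (h q)) differentiable at p"
    unfolding det_3 by (intro differentiable_add differentiable_diff differentiable_mult hd)
  have Wdet: "wirt a (\<lambda>q. det (h q)) p =
      (\<Sum>b\<in>UNIV. \<Sum>c\<in>UNIV. wirt a (\<lambda>q. h q $ b $ c) p * cofm (h p) $ c $ b)"
    unfolding det_3
    by (simp add: wirt_add wirt_diff wirt_mult differentiable_add differentiable_diff differentiable_mult hd)
       (simp add: sum_3 cofm_def n45 algebra_simps)
  have vol: "det (h q) * \<omega> q = habs * cnj (\<omega> q)" if "q \<in> U" for q
  proof -
    have "(\<Sum>a\<in>UNIV. \<Sum>b\<in>UNIV. \<Sum>c\<in>UNIV. h q $ a $ 1 * h q $ b $ 2 * h q $ c $ 3 * (eps a b c * \<omega> q))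
          = habs * cnj (eps 1 2 3 * \<omega> q)"
      using h_vol[OF that, of 1 2 3] unfolding \<Omega>_eq .
    then show ?thesis unfolding sum_3 eps_tab det_3 by (simp add: algebra_simps)
  qed
  have W0: "wirt a (\<lambda>q. det (h q) * \<omega> q) p = 0"
  proof -
    have "wirt a (\<lambda>q. habs * cnj (\<omega> q)) p = wirt a (\<lambda>q. det (h q) * \<omega> q) p"
      by (rule wirt_local[OF differentiable_mult[OF dd \<omega>d] U_open pU]) (simp add: vol)
    moreover have "wirt a (\<lambda>q. habs * cnj (\<omega> q)) p = 0"
      using wirt_cmult[OF cd] wirt_cnj[OF L Llin] by simp
    ultimately show ?thesis by simp
  qed
  define tr where "tr = (\<Sum>b\<in>UNIV. Gam h a b b p)"
  have dettr: "det (h p) * tr = wirt a (\<lambda>q. det (h q)) p"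
    unfolding Wdet tr_def Gam_def hinv_def cofm_inv[OF h_inv[OF pU]] sum_distrib_left
    by (simp add: sum_distrib_left mult_ac)
  have detnz: "det (h p) \<noteq> 0" using h_inv[OF pU] by (simp add: invertible_det_nz)
  have key: "wirt a \<omega> p + tr * \<omega> p = 0"
  proof -
    have "det (h p) * (wirt a \<omega> p + tr * \<omega> p) = wirt a (\<lambda>q. det (h q) * \<omega> q) p"
      using wirt_mult[OF dd \<omega>d, of a] dettr by (simp add: algebra_simps)
    then show ?thesis using W0 detnz by simp
  qed
  have split: "(\<Sum>e\<in>UNIV. M e * (eps x y z * \<omega> p)) = (\<Sum>e\<in>UNIV. M e * eps x y z) * \<omega> p"
    for M :: "3 \<Rightarrow> complex" and x y z
    by (simp add: sum_distrib_right mult.assoc)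
  have "nabla3 h a \<Omega> b c d p = eps b c d * wirt a \<omega> p +
      ((\<Sum>e\<in>UNIV. Gam h a b e p * eps e c d) + (\<Sum>e\<in>UNIV. Gam h a c e p * eps b e d)
       + (\<Sum>e\<in>UNIV. Gam h a d e p * eps b c e)) * \<omega> p"
    unfolding nabla3_def \<Omega>_eq wirt_cmult[OF \<omega>d] by (simp add: algebra_simps sum_distrib_left)
  also have "\<dots> = eps b c d * (wirt a \<omega> p + tr * \<omega> p)"
    using eps_trace[of "\<lambda>x y. Gam h a x y p" b c d] unfolding tr_def sum_3 by (simp add: algebra_simps)
  also have "\<dots> = 0" using key by simp
  finally show "nabla3 h a \<Omega> b c d p = 0" .
qed

end
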